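(* Let $p$ be an odd prime and let $\sim$ be a nontrivial equivalence relation on $\mathbb{Z}_p^\times = \mathbb{Z}_p - \{0\}$ such that for $x \neq y$, $x \sim y$ implies $(y-x) \sim (-x)$. Then: (1) for every $x \in \mathbb{Z}_p^\times$, $x \not\sim (-x)$; (2) if $x,y$ are distinct elements of some equivalence class, then $y-x$ does not belong to that class; (3) if $x \sim y$ and $x \neq y$, then $(-x) \not\sim (-y)$; (4) if $x,y$ and $z,w$ are two pairs of distinct elements of some equivalence class (i.e. $x\neq y$, $z \neq w$, all four in the same class) and $x-y=z-w$, then $x=z$ and $y=w$.
   Context: An equivalence relation is nontrivial if it has at least two equivalence classes. *)

theory Defs
  imports "HOL-Computational_Algebra.Primes"
begin

text \<open>Z_p^x represented by the integer residues 1..p-1; arithmetic is taken mod p.\<close>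
definition Zp_units :: "int \<Rightarrow> int set" where
  "Zp_units p = {1..p - 1}"

end

theory Submission
  imports Defs
begin

lemma part1:
  fixes p :: int and R :: "(int \<times> int) set"
  assumes pr: "prime p" and od: "odd p"
    and eq: "equiv (Zp_units p) R"
    and card: "card (Zp_units p // R) \<ge> 2"
    and H: "\<And>x y. (x, y) \<in> R \<Longrightarrow> x \<noteq> y \<Longrightarrow> ((y - x) mod p, (- x) mod p) \<in> R"
    and xU: "x \<in> Zp_units p" and xR: "(x, (- x) mod p) \<in> R"
  shows False
proof -
  have sub: "R \<subseteq> Zp_units p \<times> Zp_units p" using eq by (auto simp: equiv_def refl_on_def)
  have sy: "\<And>a b. (a,b) \<in> R \<Longrightarrow> (b,a) \<in> R" using eq by (auto simp: equiv_def sym_def)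
  have tr: "\<And>a b c. (a,b) \<in> R \<Longrightarrow> (b,c) \<in> R \<Longrightarrow> (a,c) \<in> R" using eq
    unfolding equiv_def trans_def by blast
  have x1: "1 \<le> x" "x < p" using xU by (auto simp: Zp_units_def)
  have step: "(x, (y + x) mod p) \<in> R" if "(x,y) \<in> R" "y \<noteq> (-x) mod p" for y
  proof -
    have "((-x) mod p, y) \<in> R" using that(1) xR sy tr by blast
    from H[OF this] that(2)
    have "((y - (-x) mod p) mod p, (- ((-x) mod p)) mod p) \<in> R" by auto
    moreover have "(y - (-x) mod p) mod p = (y + x) mod p"
      by (simp add: mod_diff_right_eq)
    moreover have "(- ((-x) mod p)) mod p = x"
      using x1 by (simp add: mod_minus_eq)
    ultimately show ?thesis using sy by auto
  qed
  have mult: "1 \<le> k \<longrightarrow> int k < p \<longrightarrow> (x, (int k * x) mod p) \<in> R" for k :: nat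
  proof (induction k)
    case 0 then show ?case by simp
  next
    case (Suc k)
    show ?case
    proof (cases "k = 0")
      case True
      then show ?thesis using x1 eq xU by (auto simp: equiv_def refl_on_def)
    next
      case False
      show ?thesis
      proof (intro impI)
        assume lt: "int (Suc k) < p"
        have IH: "(x, (int k * x) mod p) \<in> R" using Suc False lt by simp
        have ne: "(int k * x) mod p \<noteq> (-x) mod p"
        proof
          assume "(int k * x) mod p = (-x) mod p"
          hence "(int k * x - (- x)) mod p = 0" by (simp add: mod_eq_dvd_iff)
          hence "p dvd (int k + 1) * x" by (simp add: algebra_simps mod_eq_0_iff_dvd)
          hence "p dvd (int k + 1) \<or> p dvd x" using pr by (simp add: prime_dvd_mult_iff)
          moreover have "\<not> p dvd (int k + 1)" using lt zdvd_not_zless[of "int k + 1" p] by simp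
          moreover have "\<not> p dvd x" using x1 zdvd_not_zless[of x p] by simp
          ultimately show False by blast
        qed
        have "(x, ((int k * x) mod p + x) mod p) \<in> R" using step[OF IH ne] .
        moreover have "((int k * x) mod p + x) mod p = (int (Suc k) * x) mod p"
        proof -
          have "((int k * x) mod p + x) mod p = (int k * x + x) mod p" by (simp add: mod_add_left_eq)
          also have "int k * x + x = int (Suc k) * x" by (simp add: algebra_simps)
          finally show ?thesis .
        qed
        ultimately show "(x, (int (Suc k) * x) mod p) \<in> R" by simp
      qed
    qed
  qed
  have all: "(x, u) \<in> R" if uU: "u \<in> Zp_units p" for u
  proof -
    have u1: "1 \<le> u" "u < p" using uU by (auto simp: Zp_units_def)
    have "\<not> p dvd x" using x1 zdvd_not_zless[of x p] by simp
    hence "coprime p x" using pr prime_imp_coprime_int by blast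
    hence g: "gcd x p = 1" by (simp add: coprime_iff_gcd_eq_1 gcd.commute)
    obtain a b where ab: "a * x + b * p = 1" using bezout_int[of x p] g by auto
    define k where "k = (a * u) mod p"
    have p0: "p > 0" using x1 by simp
    have kx: "(k * x) mod p = u"
    proof -
      have "(k * x) mod p = (a * u * x) mod p" unfolding k_def by (simp add: mod_mult_left_eq)
      also have "a * u * x = u - (u * b) * p"
      proof -
        have h: "u * (a * x) + u * (b * p) = u" using ab by (metis distrib_left mult_1_right)
        have "a * u * x = u * (a * x)" "(u * b) * p = u * (b * p)" by (simp_all add: ac_simps)
        thus ?thesis using h by linarith
      qed
      also have "(u - (u * b) * p) mod p = u mod p"
      proof -
        have "u - (u * b) * p = u + (-(u * b)) * p" by simp
        thus ?thesis by (simp only: mod_mult_self1)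
      qed
      also have "\<dots> = u" using u1 by simp
      finally show ?thesis .
    qed
    have k0: "k \<ge> 0" "k < p" unfolding k_def using p0 by auto
    have "k \<noteq> 0" using kx u1 by auto
    hence "1 \<le> nat k" "int (nat k) < p" using k0 by auto
    with mult[of "nat k"] have "(x, (int (nat k) * x) mod p) \<in> R" by blast
    thus ?thesis using kx k0 by simp
  qed
  have "Zp_units p // R = {R `` {x}}"
  proof
    show "Zp_units p // R \<subseteq> {R `` {x}}"
      unfolding quotient_def using all equiv_class_eq[OF eq] by blast
    show "{R `` {x}} \<subseteq> Zp_units p // R" using xU by (auto simp: quotient_def)
  qed
  thus False using card by simp
qed

theorem proposition3p15:
  fixes p :: int and R :: "(int \<times> int) set"
  assumes "prime p" and "odd p"
    and "equiv (Zp_units p) R"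
    and "card (Zp_units p // R) \<ge> 2"
    and "\<And>x y. (x, y) \<in> R \<Longrightarrow> x \<noteq> y \<Longrightarrow> ((y - x) mod p, (- x) mod p) \<in> R"
  shows "(\<forall>x \<in> Zp_units p. (x, (- x) mod p) \<notin> R)
    \<and> (\<forall>x y. (x, y) \<in> R \<and> x \<noteq> y \<longrightarrow> (x, (y - x) mod p) \<notin> R)
    \<and> (\<forall>x y. (x, y) \<in> R \<and> x \<noteq> y \<longrightarrow> ((- x) mod p, (- y) mod p) \<notin> R)
    \<and> (\<forall>x y z w. (x, y) \<in> R \<and> (x, z) \<in> R \<and> (x, w) \<in> R \<and> x \<noteq> y \<and> z \<noteq> w
          \<and> (x - y) mod p = (z - w) mod p \<longrightarrow> x = z \<and> y = w)"
proof -
  note H = assms(5)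
  have eq: "equiv (Zp_units p) R" by fact
  have sub: "\<And>a b. (a,b) \<in> R \<Longrightarrow> 1 \<le> a \<and> a < p \<and> 1 \<le> b \<and> b < p"
    using eq by (auto simp: equiv_def refl_on_def Zp_units_def)
  have sy: "\<And>a b. (a,b) \<in> R \<Longrightarrow> (b,a) \<in> R" using eq by (auto simp: equiv_def sym_def)
  have tr: "\<And>a b c. (a,b) \<in> R \<Longrightarrow> (b,c) \<in> R \<Longrightarrow> (a,c) \<in> R" using eq
    unfolding equiv_def trans_def by blast
  have P1: "\<forall>x \<in> Zp_units p. (x, (- x) mod p) \<notin> R"
    using part1[OF assms] by blast
  have P2: "(x, (y - x) mod p) \<notin> R" if "(x, y) \<in> R" "x \<noteq> y" for x y
  proof
    assume a: "(x, (y - x) mod p) \<in> R"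
    have "((y - x) mod p, (- x) mod p) \<in> R" using H that by blast
    hence "(x, (-x) mod p) \<in> R" using a tr by blast
    moreover have "x \<in> Zp_units p" using sub[OF that(1)] by (simp add: Zp_units_def)
    ultimately show False using P1 by blast
  qed
  have P3: "((- x) mod p, (- y) mod p) \<notin> R" if "(x, y) \<in> R" "x \<noteq> y" for x y
  proof
    assume a: "((- x) mod p, (- y) mod p) \<in> R"
    have b: "1 \<le> x \<and> x < p \<and> 1 \<le> y \<and> y < p" using sub[OF that(1)] .
    have "(- x) mod p \<noteq> (- y) mod p"
    proof
      assume "(- x) mod p = (- y) mod p"
      hence "(- (-x)) mod p = (-(-y)) mod p" by (metis mod_minus_eq)
      thus False using b that(2) by simp
    qed
    from H[OF a this] have "(((- y) mod p - (- x) mod p) mod p, (- ((- x) mod p)) mod p) \<in> R" .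
    moreover have "((- y) mod p - (- x) mod p) mod p = (x - y) mod p"
      using mod_diff_eq[of "-y" p "-x"] by simp
    moreover have "(- ((- x) mod p)) mod p = x" using b by (simp add: mod_minus_eq)
    ultimately have c: "((x - y) mod p, x) \<in> R" by simp
    have ne: "(x - y) mod p \<noteq> x"
    proof
      assume "(x - y) mod p = x"
      hence "(x - y) mod p = x mod p" using b by simp
      hence "(x - y - x) mod p = 0" by (simp add: mod_eq_dvd_iff)
      hence "p dvd y" by (simp add: mod_eq_0_iff_dvd)
      thus False using b zdvd_not_zless[of y p] by simp
    qed
    have "((x - y) mod p, (x - (x - y) mod p) mod p) \<notin> R" using P2[OF c ne] .
    moreover have "(x - (x - y) mod p) mod p = y" using b by (simp add: mod_diff_right_eq)
    ultimately have "((x - y) mod p, y) \<notin> R" by simp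
    moreover have "((x - y) mod p, y) \<in> R" using c that(1) tr by blast
    ultimately show False by blast
  qed
  have P4: "x = z \<and> y = w" if "(x, y) \<in> R" "(x, z) \<in> R" "(x, w) \<in> R" "x \<noteq> y" "z \<noteq> w"
    "(x - y) mod p = (z - w) mod p" for x y z w
  proof -
    have zw: "(z, w) \<in> R" using that sy tr by blast
    have e: "(y - x) mod p = (w - z) mod p" using that(6)
      by (metis minus_diff_eq mod_minus_eq)
    have "((y - x) mod p, (- x) mod p) \<in> R" using H that by blast
    moreover have "((w - z) mod p, (- z) mod p) \<in> R" using H zw that by blast
    ultimately have nx: "((- x) mod p, (- z) mod p) \<in> R" using e sy tr by metis
    have xz: "x = z"
    proof (rule ccontr)
      assume "x \<noteq> z"
      thus False using P3[OF that(2)] nx by blast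
    qed
    have b: "1 \<le> y \<and> y < p \<and> 1 \<le> w \<and> w < p" using sub[OF that(1)] sub[OF that(3)] by simp
    have "(x - y) mod p = (x - w) mod p" using that(6) xz by simp
    hence "(-(x - y)) mod p = (-(x - w)) mod p" by (metis mod_minus_eq)
    hence "(y - x) mod p = (w - x) mod p" by simp
    hence "y mod p = w mod p" using mod_add_cong[of "y - x" p "w - x" x x] by simp
    hence "y = w" using b by simp
    thus ?thesis using xz by simp
  qed
  show ?thesis using P1 P2 P3 P4 by blast
qed

end
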